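(* Let $n \ge 1$ and let $p_0, p_1, \ldots, p_n \in \mathbb{Z}^2$ be integer points with $p_n = p_0$, forming the closed polygon $P = (p_0, p_1, \ldots, p_n)$ (not necessarily simple). Then $$\mathrm{Area}(P) = \mathrm{Welp}(P), \qquad\text{where } \mathrm{Welp}(P) := \sum_{q \in \mathbb{Z}^2} \mathrm{Dang}(P - q).$$
   Context: Work over an ordered field $\mathbb{K}$ containing $\mathbb{Q}$ (e.g. $\mathbb{Q}$ or $\mathbb{R}$), viewing $\mathbb{Z}^2 \subset \mathbb{K}^2$. For $u = (u_1,u_2), v = (v_1,v_2) \in \mathbb{K}^2$ define $\mathrm{area}(u,v) := \tfrac12 (u_1 - v_1)(u_2 + v_2)$, and for a polygon $P = (p_0, \ldots, p_n)$ define $\mathrm{Area}(P) := \sum_{i=1}^n \mathrm{area}(p_{i-1}, p_i)$. Let $\operatorname{sign} \colon \mathbb{K} \to \{-1,0,1\}$ be the sign function. The discrete angle measure is $$\mathrm{dang}(u,v) := \tfrac14 \,\bigl|\operatorname{sign} u_1 - \operatorname{sign} v_1\bigr| \cdot \operatorname{sign}(u_1 v_2 - u_2 v_1),$$ and for a polygon $P = (p_0,\ldots,p_n)$ we set $\mathrm{Dang}(P) := \sum_{i=1}^n \mathrm{dang}(p_{i-1}, p_i)$. For $q \in \mathbb{K}^2$, $P - q := (p_0 - q, \ldots, p_n - q)$. (Only finitely many $q \in \mathbb{Z}^2$ give $\mathrm{Dang}(P-q) \ne 0$, namely those in a sufficiently large box containing all vertices, so the sum defining $\mathrm{Welp}(P)$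 is finite.) *)

theory Defs
  imports Main
begin

text \<open>A polygon P = (p_0,...,p_n) is given by n and a function p :: nat \<Rightarrow> _ (only p 0 .. p n matter).\<close>

definition area :: "'a::linordered_field \<times> 'a \<Rightarrow> 'a \<times> 'a \<Rightarrow> 'a" where
  "area u v = (1/2) * (fst u - fst v) * (snd u + snd v)"

definition Area :: "nat \<Rightarrow> (nat \<Rightarrow> 'a::linordered_field \<times> 'a) \<Rightarrow> 'a" where
  "Area n p = (\<Sum>i=1..n. area (p (i - 1)) (p i))"

definition dang :: "'a::linordered_field \<times> 'a \<Rightarrow> 'a \<times> 'a \<Rightarrow> 'a" where
  "dang u v = (1/4) * \<bar>sgn (fst u) - sgn (fst v)\<bar> * sgn (fst u * snd v - snd u * fst v)"

definition Dang :: "nat \<Rightarrow> (nat \<Rightarrow> 'a::linordered_field \<times> 'a) \<Rightarrow> 'a" where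
  "Dang n p = (\<Sum>i=1..n. dang (p (i - 1)) (p i))"

definition emb :: "int \<times> int \<Rightarrow> 'a::linordered_field \<times> 'a" where
  "emb z = (of_int (fst z), of_int (snd z))"

definition shift :: "(nat \<Rightarrow> 'a::linordered_field \<times> 'a) \<Rightarrow> 'a \<times> 'a \<Rightarrow> (nat \<Rightarrow> 'a \<times> 'a)" where
  "shift p q = (\<lambda>i. (fst (p i) - fst q, snd (p i) - snd q))"

text \<open>Welp(P) = sum over q in Z^2 of Dang(P - q); the sum has finite support, so it is the
  finite sum over the support.\<close>
definition Welp :: "nat \<Rightarrow> (nat \<Rightarrow> 'a::linordered_field \<times> 'a) \<Rightarrow> 'a" where
  "Welp n p = (\<Sum>q\<in>{q::int \<times> int. Dang n (shift p (emb q)) \<noteq> 0}. Dang n (shift p (emb q)))"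

end

theory Submission
  imports Defs
begin

lemma split_shift:
  fixes f :: "int \<Rightarrow> int" and a b k :: int
  assumes "a \<le> b + 1" "0 \<le> k"
  shows "(\<Sum>y\<in>{a..b}. f y) - (\<Sum>y\<in>{a+k..b+k}. f y)
       = (\<Sum>y\<in>{a..a+k-1}. f y) - (\<Sum>y\<in>{b+1..b+k}. f y)"
proof -
  have e1: "{a..b+k} = {a..b} \<union> {b+1..b+k}" using assms by auto
  have e2: "{a..b+k} = {a..a+k-1} \<union> {a+k..b+k}" using assms by auto
  have s1: "(\<Sum>y\<in>{a..b+k}. f y) = (\<Sum>y\<in>{a..b}. f y) + (\<Sum>y\<in>{b+1..b+k}. f y)"
    unfolding e1 by (rule sum.union_disjoint) auto
  have s2: "(\<Sum>y\<in>{a..b+k}. f y) = (\<Sum>y\<in>{a..a+k-1}. f y) + (\<Sum>y\<in>{a+k..b+k}. f y)"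
    unfolding e2 by (rule sum.union_disjoint) auto
  show ?thesis using s1 s2 by linarith
qed

lemma sum_shift_int:
  fixes f :: "int \<Rightarrow> int"
  shows "(\<Sum>y\<in>{a..b}. f (y + k)) = (\<Sum>y\<in>{a+k..b+k}. f y)"
  by (rule sum.reindex_bij_witness[where i="\<lambda>y. y - k" and j="\<lambda>y. y + k"]) auto

lemma sum_const_on:
  fixes f :: "int \<Rightarrow> int"
  assumes "\<And>y. y \<in> {a..b} \<Longrightarrow> f y = c"
  shows "(\<Sum>y\<in>{a..b}. f y) = c * (max 0 (b - a + 1))"
proof -
  have "(\<Sum>y\<in>{a..b}. f y) = (\<Sum>y\<in>{a..b}. c)" using assms by simp
  also have "\<dots> = c * (max 0 (b - a + 1))" by (simp add: max_def mult.commute)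
  finally show ?thesis .
qed

lemma rowdiff:
  fixes d m lo hi Y0 Y1 :: int
  assumes d: "d > 0" and "Y0 \<le> lo" "lo \<le> hi" "hi \<le> Y1" "d*lo \<le> m" "m \<le> d*hi"
  defines "k \<equiv> lo + hi - Y0 - Y1"
  shows "(\<Sum>y\<in>{Y0..Y1}. sgn (d*y - m)) - (\<Sum>y\<in>{Y0..Y1}. sgn (d*(y+k) - m)) = -2*k"
proof -
  let ?f = "\<lambda>y. sgn (d*y - m)"
  have sh: "(\<Sum>y\<in>{Y0..Y1}. sgn (d*(y+k) - m)) = (\<Sum>y\<in>{Y0+k..Y1+k}. ?f y)"
    using sum_shift_int[where f="?f" and a=Y0 and b=Y1 and k=k] by simp
  have neg: "?f y = -1" if "y < lo" for y
  proof -
    have "d*y < d*lo" using that d by simp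
    hence "d*y - m < 0" using assms(5) by linarith
    thus ?thesis by (simp add: sgn_if)
  qed
  have pos: "?f y = 1" if "y > hi" for y
  proof -
    have "d*y > d*hi" using that d by simp
    hence "d*y - m > 0" using assms(6) by linarith
    thus ?thesis by (simp add: sgn_if)
  qed
  show ?thesis
  proof (cases "k \<ge> 0")
    case True
    have A: "(\<Sum>y\<in>{Y0..Y0+k-1}. ?f y) = -1 * max 0 (Y0+k-1 - Y0 + 1)"
      by (rule sum_const_on) (use neg assms in \<open>auto simp: k_def\<close>)
    have B: "(\<Sum>y\<in>{Y1+1..Y1+k}. ?f y) = 1 * max 0 (Y1+k - (Y1+1) + 1)"
      by (rule sum_const_on) (use pos assms in \<open>auto simp: k_def\<close>)
    show ?thesis using split_shift[of Y0 Y1 k ?f] True assms A B sh by simp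
  next
    case False
    have sp: "(\<Sum>y\<in>{Y0+k..Y1+k}. ?f y) - (\<Sum>y\<in>{Y0+k+(-k)..Y1+k+(-k)}. ?f y)
       = (\<Sum>y\<in>{Y0+k..Y0+k+(-k)-1}. ?f y) - (\<Sum>y\<in>{Y1+k+1..Y1+k+(-k)}. ?f y)"
      by (rule split_shift) (use False assms in auto)
    have A: "(\<Sum>y\<in>{Y0+k..Y0+k+(-k)-1}. ?f y) = -1 * max 0 (Y0+k+(-k)-1 - (Y0+k) + 1)"
      by (rule sum_const_on) (use neg assms in \<open>auto simp: k_def\<close>)
    have B: "(\<Sum>y\<in>{Y1+k+1..Y1+k+(-k)}. ?f y) = 1 * max 0 (Y1+k+(-k) - (Y1+k+1) + 1)"
      by (rule sum_const_on) (use pos assms in \<open>auto simp: k_def\<close>)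
    show ?thesis using sp A B sh False by simp
  qed
qed


lemma Wsum:
  fixes u1 v1 :: int assumes "u1 < v1"
  shows "(\<Sum>x\<in>{u1..v1}. \<bar>sgn (u1 - x) - sgn (v1 - x)\<bar>) = 2 * (v1 - u1)"
proof -
  have e: "{u1..v1} = insert u1 (insert v1 {u1<..<v1})" using assms by auto
  have "(\<Sum>x\<in>{u1<..<v1}. \<bar>sgn (u1 - x) - sgn (v1 - x)\<bar>) = (\<Sum>x\<in>{u1<..<v1}. 2)"
    by (rule sum.cong) auto
  also have "\<dots> = 2 * (v1 - u1 - 1)" using assms by simp
  finally have "(\<Sum>x\<in>{u1<..<v1}. \<bar>sgn (u1 - x) - sgn (v1 - x)\<bar>) = 2 * (v1 - u1 - 1)" .
  thus ?thesis unfolding e using assms by simp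
qed

lemma edge_lt:
  fixes u1 u2 v1 v2 X0 X1 Y0 Y1 :: int
  assumes lt: "u1 < v1" and "X0 \<le> u1" "v1 \<le> X1"
    and "Y0 \<le> u2" "Y0 \<le> v2" "u2 \<le> Y1" "v2 \<le> Y1"
  shows "(\<Sum>(x,y)\<in>{X0..X1}\<times>{Y0..Y1}. \<bar>sgn (u1 - x) - sgn (v1 - x)\<bar> *
            sgn ((u1 - x) * (v2 - y) - (u2 - y) * (v1 - x)))
       = 2*(u1-v1)*(u2+v2) + 2*(Y0+Y1)*(v1-u1)"
proof -
  define d where "d = v1 - u1"
  define W where "W x = \<bar>sgn (u1 - x) - sgn (v1 - x)\<bar>" for x :: int
  define M where "M x = u2*(v1-x) + v2*(x-u1)" for x :: int
  define R where "R x = (\<Sum>y\<in>{Y0..Y1}. sgn (d*y - M x))" for x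
  have d: "d > 0" using lt by (simp add: d_def)
  have cross: "(u1 - x) * (v2 - y) - (u2 - y) * (v1 - x) = d*y - M x" for x y
    by (simp add: d_def M_def algebra_simps)
  have S1: "(\<Sum>(x,y)\<in>{X0..X1}\<times>{Y0..Y1}. \<bar>sgn (u1 - x) - sgn (v1 - x)\<bar> *
            sgn ((u1 - x) * (v2 - y) - (u2 - y) * (v1 - x))) = (\<Sum>x\<in>{X0..X1}. W x * R x)"
    by (simp add: sum.cartesian_product[symmetric] cross W_def R_def sum_distrib_left)
  have S2: "(\<Sum>x\<in>{X0..X1}. W x * R x) = (\<Sum>x\<in>{u1..v1}. W x * R x)"
  proof (rule sum.mono_neutral_right)
    show "\<forall>x\<in>{X0..X1} - {u1..v1}. W x * R x = 0"
    proof
      fix x assume "x \<in> {X0..X1} - {u1..v1}"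
      hence "x < u1 \<or> x > v1" by auto
      thus "W x * R x = 0" using lt by (auto simp: W_def)
    qed
  qed (use assms in auto)
  have Wsym: "W (u1 + v1 - x) = W x" for x
    by (simp add: W_def sgn_if)
  have S3: "(\<Sum>x\<in>{u1..v1}. W x * R x) = (\<Sum>x\<in>{u1..v1}. W x * R (u1 + v1 - x))"
    by (rule sum.reindex_bij_witness[where i="\<lambda>x. u1 + v1 - x" and j="\<lambda>x. u1 + v1 - x"])
       (auto simp: Wsym)
  have S4: "R x + R (u1 + v1 - x) = 2 * (Y0 + Y1 - (u2 + v2))" if x: "x \<in> {u1..v1}" for x
  proof -
    define lo where "lo = min u2 v2"
    define hi where "hi = max u2 v2"
    define k where "k = lo + hi - Y0 - Y1"
    have a: "0 \<le> v1 - x" "0 \<le> x - u1" using x by auto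
    have m1: "d*lo \<le> M x"
    proof -
      have "M x - d*lo = (u2-lo)*(v1-x) + (v2-lo)*(x-u1)" by (simp add: M_def d_def algebra_simps)
      also have "\<dots> \<ge> 0" using a by (simp add: lo_def)
      finally show ?thesis by simp
    qed
    have m2: "M x \<le> d*hi"
    proof -
      have "d*hi - M x = (hi-u2)*(v1-x) + (hi-v2)*(x-u1)" by (simp add: M_def d_def algebra_simps)
      also have "\<dots> \<ge> 0" using a by (simp add: hi_def)
      finally show ?thesis by simp
    qed
    have rd: "(\<Sum>y\<in>{Y0..Y1}. sgn (d*y - M x)) - (\<Sum>y\<in>{Y0..Y1}. sgn (d*(y+k) - M x)) = -2*k"
      unfolding k_def by (rule rowdiff) (use d assms m1 m2 in \<open>auto simp: lo_def hi_def\<close>)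
    have Mx': "M (u1 + v1 - x) = (u2+v2)*d - M x" by (simp add: M_def d_def algebra_simps)
    have "R (u1 + v1 - x) = (\<Sum>y\<in>{Y0..Y1}. sgn (d*y - ((u2+v2)*d - M x)))"
      by (simp add: R_def Mx')
    also have "\<dots> = (\<Sum>y\<in>{Y0..Y1}. sgn (d*((Y0+Y1) - y) - ((u2+v2)*d - M x)))"
      by (rule sum.reindex_bij_witness[where i="\<lambda>y. Y0 + Y1 - y" and j="\<lambda>y. Y0 + Y1 - y"]) auto
    also have "\<dots> = (\<Sum>y\<in>{Y0..Y1}. - sgn (d*(y+k) - M x))"
    proof (rule sum.cong)
      fix y
      have eq: "d*((Y0+Y1) - y) - ((u2+v2)*d - M x) = - (d*(y+k) - M x)"
        by (simp add: k_def lo_def hi_def algebra_simps min_def max_def)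
      show "sgn (d*((Y0+Y1) - y) - ((u2+v2)*d - M x)) = - sgn (d*(y+k) - M x)"
        by (simp only: eq sgn_minus)
    qed simp
    also have "\<dots> = - (\<Sum>y\<in>{Y0..Y1}. sgn (d*(y+k) - M x))" by (simp add: sum_negf)
    finally have "R (u1 + v1 - x) = - (\<Sum>y\<in>{Y0..Y1}. sgn (d*(y+k) - M x))" .
    hence "R x + R (u1 + v1 - x) = -2*k" using rd by (simp add: R_def)
    thus ?thesis by (simp add: k_def lo_def hi_def min_def max_def)
  qed
  have "2 * (\<Sum>x\<in>{u1..v1}. W x * R x) = (\<Sum>x\<in>{u1..v1}. W x * (R x + R (u1 + v1 - x)))"
    using S3 by (simp add: algebra_simps sum.distrib)
  also have "\<dots> = (\<Sum>x\<in>{u1..v1}. W x * (2 * (Y0 + Y1 - (u2 + v2))))"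
    by (rule sum.cong) (use S4 in auto)
  also have "\<dots> = 2 * (Y0 + Y1 - (u2 + v2)) * (2 * d)"
    using Wsum[OF lt] by (simp add: sum_distrib_right[symmetric] W_def d_def mult.commute)
  finally have "(\<Sum>x\<in>{u1..v1}. W x * R x) = 2 * d * (Y0 + Y1 - (u2 + v2))" by simp
  thus ?thesis using S1 S2 by (simp add: d_def algebra_simps)
qed


definition Dz :: "int \<Rightarrow> int \<Rightarrow> int \<Rightarrow> int \<Rightarrow> int" where
  "Dz a1 a2 b1 b2 = \<bar>sgn a1 - sgn b1\<bar> * sgn (a1*b2 - a2*b1)"

lemma edge:
  fixes u1 u2 v1 v2 X0 X1 Y0 Y1 :: int
  assumes "X0 \<le> u1" "u1 \<le> X1" "X0 \<le> v1" "v1 \<le> X1"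
    and "Y0 \<le> u2" "Y0 \<le> v2" "u2 \<le> Y1" "v2 \<le> Y1"
  shows "(\<Sum>(x,y)\<in>{X0..X1}\<times>{Y0..Y1}. Dz (u1-x) (u2-y) (v1-x) (v2-y))
       = 2*(u1-v1)*(u2+v2) + 2*(Y0+Y1)*(v1-u1)"
proof (cases u1 v1 rule: linorder_cases)
  case less
  show ?thesis using edge_lt[OF less] assms by (simp add: Dz_def)
next
  case equal
  thus ?thesis by (simp add: Dz_def)
next
  case greater
  have sw: "Dz (u1-x) (u2-y) (v1-x) (v2-y) = - (\<bar>sgn (v1 - x) - sgn (u1 - x)\<bar> *
            sgn ((v1 - x) * (u2 - y) - (v2 - y) * (u1 - x)))" for x y
  proof -
    have "(u1-x)*(v2-y) - (u2-y)*(v1-x) = - ((v1 - x) * (u2 - y) - (v2 - y) * (u1 - x))"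
      by (simp add: algebra_simps)
    hence "sgn ((u1-x)*(v2-y) - (u2-y)*(v1-x)) = - sgn ((v1 - x) * (u2 - y) - (v2 - y) * (u1 - x))"
      by (simp only: sgn_minus)
    thus ?thesis by (simp add: Dz_def abs_minus_commute)
  qed
  have "(\<Sum>(x,y)\<in>{X0..X1}\<times>{Y0..Y1}. Dz (u1-x) (u2-y) (v1-x) (v2-y))
     = - (\<Sum>(x,y)\<in>{X0..X1}\<times>{Y0..Y1}. \<bar>sgn (v1 - x) - sgn (u1 - x)\<bar> *
            sgn ((v1 - x) * (u2 - y) - (v2 - y) * (u1 - x)))"
    by (simp add: sw case_prod_unfold sum_negf)
  also have "\<dots> = - (2*(v1-u1)*(v2+u2) + 2*(Y0+Y1)*(u1-v1))"
    using edge_lt[OF greater] assms by simp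
  finally show ?thesis by (simp add: algebra_simps)
qed

lemma Dz_below: assumes "b > 0" "d > 0" shows "Dz a b c d = sgn a - sgn c"
proof -
  have h: "a<0 \<Longrightarrow> a*d<0" "a>0 \<Longrightarrow> a*d>0" "c<0 \<Longrightarrow> b*c<0" "c>0 \<Longrightarrow> b*c>0"
    using assms by (simp_all add: mult_neg_pos mult_pos_pos mult_pos_neg)
  show ?thesis unfolding Dz_def
    by (cases a "0::int" rule: linorder_cases; cases c "0::int" rule: linorder_cases)
       (use h in \<open>auto simp: sgn_if\<close>)
qed

lemma Dz_above: assumes "b < 0" "d < 0" shows "Dz a b c d = sgn c - sgn a"
proof -
  have h: "a<0 \<Longrightarrow> a*d>0" "a>0 \<Longrightarrow> a*d<0" "c<0 \<Longrightarrow> b*c>0" "c>0 \<Longrightarrow> b*c<0"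
    using assms by (simp_all add: mult_neg_neg mult_pos_neg mult_neg_pos)
  show ?thesis unfolding Dz_def
    by (cases a "0::int" rule: linorder_cases; cases c "0::int" rule: linorder_cases)
       (use h in \<open>auto simp: sgn_if\<close>)
qed

lemma tele: "(\<Sum>i=1..(n::nat). (g (i-1) - g i :: int)) = g 0 - g n"
  by (induction n) (auto simp: sum.cl_ivl_Suc)


lemma sgn_of_int': "sgn (of_int x :: 'a::linordered_field) = of_int (sgn x)"
  by (simp add: sgn_if)

lemma dang_of_int:
  "dang (of_int a1 :: 'a::linordered_field, of_int a2) (of_int b1, of_int b2) = of_int (Dz a1 a2 b1 b2) / 4"
proof -
  have "sgn (of_int a1 * of_int b2 - of_int a2 * of_int b1 :: 'a) = of_int (sgn (a1*b2 - a2*b1))"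
    by (metis of_int_diff of_int_mult sgn_of_int')
  thus ?thesis by (simp add: dang_def Dz_def sgn_of_int')
qed

definition DS :: "nat \<Rightarrow> (nat \<Rightarrow> int \<times> int) \<Rightarrow> int \<times> int \<Rightarrow> int" where
  "DS n p q = (\<Sum>i=1..n. Dz (fst (p (i-1)) - fst q) (snd (p (i-1)) - snd q) (fst (p i) - fst q) (snd (p i) - snd q))"

lemma Dang_eq: "Dang n (shift (\<lambda>i. emb (p i)) (emb q)) = (of_int (DS n p q) :: 'a::linordered_field) / 4"
proof -
  have sh: "shift (\<lambda>i. emb (p i)) (emb q) i = (of_int (fst (p i) - fst q) :: 'a, of_int (snd (p i) - snd q))" for i
    by (simp add: shift_def emb_def)
  show ?thesis
    unfolding Dang_def DS_def of_int_sum sum_divide_distrib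
    by (rule sum.cong) (simp_all only: sh dang_of_int)
qed

lemma Area_eq: "Area n (\<lambda>i. emb (p i)) = (of_int (\<Sum>i=1..n. 2*(fst (p (i-1)) - fst (p i))*(snd (p (i-1)) + snd (p i))) :: 'a::linordered_field) / 4"
  unfolding Area_def of_int_sum sum_divide_distrib
  by (rule sum.cong) (simp_all add: area_def emb_def field_simps)


theorem lemma2p7:
  fixes n :: nat and p :: "nat \<Rightarrow> int \<times> int"
  assumes "n \<ge> 1" and "p n = p 0"
  shows "finite {q::int \<times> int. Dang n (shift (\<lambda>i. emb (p i)) (emb q)) \<noteq> (0::'a::linordered_field)}
         \<and> Area n (\<lambda>i. emb (p i) :: 'a \<times> 'a) = Welp n (\<lambda>i. emb (p i))"
proof -
  define A where "A = p ` {..n}"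
  have fA: "finite A" "A \<noteq> {}" by (auto simp: A_def)
  define X0 where "X0 = Min (fst ` A)"
  define X1 where "X1 = Max (fst ` A)"
  define Y0 where "Y0 = Min (snd ` A)"
  define Y1 where "Y1 = Max (snd ` A)"
  have bx: "X0 \<le> fst (p i) \<and> fst (p i) \<le> X1 \<and> Y0 \<le> snd (p i) \<and> snd (p i) \<le> Y1" if "i \<le> n" for i
  proof -
    have "p i \<in> A" using that by (auto simp: A_def)
    thus ?thesis using fA unfolding X0_def X1_def Y0_def Y1_def
      by (auto intro!: Min_le Max_ge)
  qed
  define Bx where "Bx = {X0..X1} \<times> {Y0..Y1}"
  have fB: "finite Bx" by (simp add: Bx_def)
  define g where "g a i = sgn (fst (p i) - a)" for a i
  have out: "DS n p q = 0" if "q \<notin> Bx" for q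
  proof -
    obtain a b where q: "q = (a, b)" by (cases q)
    have "a < X0 \<or> a > X1 \<or> b < Y0 \<or> b > Y1" using that by (auto simp: Bx_def q)
    moreover
    { assume a: "a < X0"
      have "\<forall>i\<in>{1..n}. Dz (fst (p (i-1)) - a) (snd (p (i-1)) - b) (fst (p i) - a) (snd (p i) - b) = 0"
      proof
        fix i assume "i \<in> {1..n}"
        hence "i - 1 \<le> n" "i \<le> n" by auto
        hence "fst (p (i-1)) - a > 0" "fst (p i) - a > 0" using bx a by force+
        hence "sgn (fst (p (i-1)) - a) = 1" "sgn (fst (p i) - a) = 1" by auto
        thus "Dz (fst (p (i-1)) - a) (snd (p (i-1)) - b) (fst (p i) - a) (snd (p i) - b) = 0"
          by (simp add: Dz_def)
      qed
      hence ?thesis by (simp add: DS_def q) }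
    moreover
    { assume a: "a > X1"
      have "\<forall>i\<in>{1..n}. Dz (fst (p (i-1)) - a) (snd (p (i-1)) - b) (fst (p i) - a) (snd (p i) - b) = 0"
      proof
        fix i assume "i \<in> {1..n}"
        hence "i - 1 \<le> n" "i \<le> n" by auto
        hence "fst (p (i-1)) - a < 0" "fst (p i) - a < 0" using bx a by force+
        hence "sgn (fst (p (i-1)) - a) = -1" "sgn (fst (p i) - a) = -1" by auto
        thus "Dz (fst (p (i-1)) - a) (snd (p (i-1)) - b) (fst (p i) - a) (snd (p i) - b) = 0"
          by (simp add: Dz_def)
      qed
      hence ?thesis by (simp add: DS_def q) }
    moreover
    { assume b: "b < Y0"
      have "DS n p q = (\<Sum>i=1..n. g a (i-1) - g a i)"
        unfolding DS_def q
      proof (rule sum.cong)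
        fix i assume "i \<in> {1..n}"
        hence "i - 1 \<le> n" "i \<le> n" by auto
        hence "snd (p (i-1)) - b > 0" "snd (p i) - b > 0" using bx b by force+
        thus "Dz (fst (p (i-1)) - fst (a,b)) (snd (p (i-1)) - snd (a,b)) (fst (p i) - fst (a,b)) (snd (p i) - snd (a,b))
              = g a (i-1) - g a i" by (simp add: Dz_below g_def)
      qed simp
      hence ?thesis using tele[of "g a" n] by (simp add: g_def assms(2)) }
    moreover
    { assume b: "b > Y1"
      have "DS n p q = - (\<Sum>i=1..n. g a (i-1) - g a i)"
        unfolding DS_def q sum_negf[symmetric]
      proof (rule sum.cong)
        fix i assume "i \<in> {1..n}"
        hence "i - 1 \<le> n" "i \<le> n" by auto
        hence "snd (p (i-1)) - b < 0" "snd (p i) - b < 0" using bx b by force+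
        thus "Dz (fst (p (i-1)) - fst (a,b)) (snd (p (i-1)) - snd (a,b)) (fst (p i) - fst (a,b)) (snd (p i) - snd (a,b))
              = - (g a (i-1) - g a i)" by (simp add: Dz_above g_def)
      qed simp
      hence ?thesis using tele[of "g a" n] by (simp add: g_def assms(2)) }
    ultimately show ?thesis by blast
  qed
  define S where "S = {q::int \<times> int. Dang n (shift (\<lambda>i. emb (p i)) (emb q)) \<noteq> (0::'a)}"
  have SE: "S = {q. DS n p q \<noteq> 0}" by (simp add: S_def Dang_eq)
  have SB: "S \<subseteq> Bx" using out SE by blast
  have fS: "finite S" using SB fB finite_subset by blast
  have W: "Welp n (\<lambda>i. emb (p i)) = (of_int (\<Sum>q\<in>S. DS n p q) :: 'a) / 4"
    by (simp add: Welp_def S_def[symmetric] Dang_eq of_int_sum sum_divide_distrib SE)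
  have "(\<Sum>q\<in>S. DS n p q) = (\<Sum>q\<in>Bx. DS n p q)"
    by (rule sum.mono_neutral_left) (use fB SB SE in auto)
  also have "\<dots> = (\<Sum>i=1..n. \<Sum>q\<in>Bx. Dz (fst (p (i-1)) - fst q) (snd (p (i-1)) - snd q) (fst (p i) - fst q) (snd (p i) - snd q))"
    unfolding DS_def by (rule sum.swap)
  also have "\<dots> = (\<Sum>i=1..n. 2*(fst (p (i-1)) - fst (p i))*(snd (p (i-1)) + snd (p i))
                  + 2*(Y0+Y1)*(fst (p i) - fst (p (i-1))))"
  proof (rule sum.cong)
    fix i assume i: "i \<in> {1..n}"
    have b1: "i - 1 \<le> n" "i \<le> n" using i by auto
    show "(\<Sum>q\<in>Bx. Dz (fst (p (i-1)) - fst q) (snd (p (i-1)) - snd q) (fst (p i) - fst q) (snd (p i) - snd q))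
       = 2*(fst (p (i-1)) - fst (p i))*(snd (p (i-1)) + snd (p i)) + 2*(Y0+Y1)*(fst (p i) - fst (p (i-1)))"
      using edge[of X0 "fst (p (i-1))" X1 "fst (p i)" Y0 "snd (p (i-1))" "snd (p i)" Y1]
        bx[OF b1(1)] bx[OF b1(2)] unfolding Bx_def by (simp add: case_prod_unfold)
  qed simp
  also have "\<dots> = (\<Sum>i=1..n. 2*(fst (p (i-1)) - fst (p i))*(snd (p (i-1)) + snd (p i)))
                  - 2*(Y0+Y1)*(\<Sum>i=1..n. fst (p (i-1)) - fst (p i))"
    by (simp add: sum.distrib sum_distrib_left sum_subtractf algebra_simps)
  also have "(\<Sum>i=1..n. fst (p (i-1)) - fst (p i)) = 0"
    using tele[of "\<lambda>i. fst (p i)" n] assms(2) by simp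
  finally have "(\<Sum>q\<in>S. DS n p q) = (\<Sum>i=1..n. 2*(fst (p (i-1)) - fst (p i))*(snd (p (i-1)) + snd (p i)))"
    by simp
  hence "Area n (\<lambda>i. emb (p i) :: 'a \<times> 'a) = Welp n (\<lambda>i. emb (p i))"
    using W by (simp add: Area_eq)
  thus ?thesis using fS by (simp add: S_def)
qed

end
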